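(* Let $(X,\|\cdot,\cdot\|)$ be a $2$-normed space, $E\subseteq X$, and $f:E\to X$. If $f$ is statistically ward continuous on $E$, then $f$ is statistically sequentially continuous on $E$; that is, for every $x_0\in E$ and every sequence $(x_k)$ of points of $E$ statistically converging to $x_0$, the sequence $(f(x_k))$ statistically converges to $f(x_0)$.
   Context: A $2$-normed space is a real linear space $X$ with $\dim X>1$ together with a function $\|\cdot,\cdot\|:X^2\to\mathbb{R}$ such that for all $x,y,z\in X$, $\alpha\in\mathbb{R}$: (1) $\|x,y\|=0$ iff $x,y$ are linearly dependent; (2) $\|x,y\|=\|y,x\|$; (3) $\|\alpha x,y\|=|\alpha|\|x,y\|$; (4) $\|x,y+z\|\le\|x,y\|+\|x,z\|$. A sequence $(x_k)$ in $X$ statistically converges to $L\in X$ if for every $\epsilon>0$ and every $z\in X$, $\lim_{n\to\infty}\frac1n|\{k\le n:\|x_k-L,z\|\ge\epsilon\}|=0$. For a sequence $(x_k)$ write $\Delta x_k=x_{k+1}-x_k$. A sequence $(x_k)$ in $X$ is statistically quasi-Cauchy if for every $\epsilon>0$ and every $z\in X$, $\lim_{n\to\infty}\frac1n|\{k\le n:\|\Delta x_k,z\|\ge\epsilon\}|=0$. A function $f:E\to X$ is statistically ward continuous on $E$ if $(f(x_k))$ is statistically quasi-Cauchy whenever $(x_k)$ is a statistically quasi-Cauchy sequence of points of $E$. *)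

theory Defs
  imports "HOL-Analysis.Analysis"
begin

definition lin_dep2 :: "'a::real_vector \<Rightarrow> 'a \<Rightarrow> bool" where
  "lin_dep2 x y \<longleftrightarrow> (\<exists>a b::real. (a \<noteq> 0 \<or> b \<noteq> 0) \<and> a *\<^sub>R x + b *\<^sub>R y = 0)"

definition two_norm :: "('a::real_vector \<Rightarrow> 'a \<Rightarrow> real) \<Rightarrow> bool" where
  "two_norm N \<longleftrightarrow>
     (\<exists>x y::'a. \<not> lin_dep2 x y) \<and>
     (\<forall>x y. N x y = 0 \<longleftrightarrow> lin_dep2 x y) \<and>
     (\<forall>x y. N x y = N y x) \<and>
     (\<forall>(\<alpha>::real) x y. N (\<alpha> *\<^sub>R x) y = \<bar>\<alpha>\<bar> * N x y) \<and>
     (\<forall>x y z. N x (y + z) \<le> N x y + N x z)"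

definition stat_conv :: "('a::real_vector \<Rightarrow> 'a \<Rightarrow> real) \<Rightarrow> (nat \<Rightarrow> 'a) \<Rightarrow> 'a \<Rightarrow> bool" where
  "stat_conv N x L \<longleftrightarrow> (\<forall>\<epsilon>>0. \<forall>z.
     (\<lambda>n. real (card {k\<in>{1..n}. N (x k - L) z \<ge> \<epsilon>}) / real n) \<longlonglongrightarrow> 0)"

definition stat_quasi_cauchy :: "('a::real_vector \<Rightarrow> 'a \<Rightarrow> real) \<Rightarrow> (nat \<Rightarrow> 'a) \<Rightarrow> bool" where
  "stat_quasi_cauchy N x \<longleftrightarrow> (\<forall>\<epsilon>>0. \<forall>z.
     (\<lambda>n. real (card {k\<in>{1..n}. N (x (Suc k) - x k) z \<ge> \<epsilon>}) / real n) \<longlonglongrightarrow> 0)"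

definition stat_ward_cont :: "('a::real_vector \<Rightarrow> 'a \<Rightarrow> real) \<Rightarrow> 'a set \<Rightarrow> ('a \<Rightarrow> 'a) \<Rightarrow> bool" where
  "stat_ward_cont N E f \<longleftrightarrow> (\<forall>x. (\<forall>k. x k \<in> E) \<longrightarrow> stat_quasi_cauchy N x \<longrightarrow>
      stat_quasi_cauchy N (\<lambda>k. f (x k)))"

end

theory Submission
  imports Defs
begin

lemma neg_N:
  assumes "two_norm N" shows "N (- v) z = N v z"
proof -
  have "N ((-1::real) *\<^sub>R v) z = \<bar>-1::real\<bar> * N v z"
    using assms unfolding two_norm_def by blast
  thus ?thesis by simp
qed

theorem theorem3p3:
  fixes N :: "'a::real_vector \<Rightarrow> 'a \<Rightarrow> real" and E :: "'a set" and f :: "'a \<Rightarrow> 'a"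
  assumes "two_norm N"
    and "stat_ward_cont N E f"
  shows "\<forall>x0\<in>E. \<forall>x. (\<forall>k. x k \<in> E) \<longrightarrow> stat_conv N x x0 \<longrightarrow> stat_conv N (\<lambda>k. f (x k)) (f x0)"
proof (intro ballI allI impI)
  fix x0 x assume x0: "x0 \<in> E" and xE: "\<forall>k. x k \<in> E" and sc: "stat_conv N x x0"
  define y where "y j = (if even j then x (j div 2) else x0)" for j
  have yE: "\<forall>j. y j \<in> E" using x0 xE by (simp add: y_def)
  have qc: "stat_quasi_cauchy N y"
    unfolding stat_quasi_cauchy_def
  proof (intro allI impI)
    fix \<epsilon> :: real and z assume e: "\<epsilon> > 0"
    define B where "B n = {k\<in>{1..n}. N (x k - x0) z \<ge> \<epsilon>}" for n
    have B0: "(\<lambda>n. real (card (B n)) / real n) \<longlonglongrightarrow> 0"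
      using sc e unfolding stat_conv_def B_def by blast
    have "(\<lambda>n. 2 * (real (card (B n)) / real n)) \<longlonglongrightarrow> 2 * 0"
      by (intro tendsto_mult tendsto_const B0)
    hence B2: "(\<lambda>n. 2 * (real (card (B n)) / real n)) \<longlonglongrightarrow> 0" by simp
    show "(\<lambda>n. real (card {k\<in>{1..n}. N (y (Suc k) - y k) z \<ge> \<epsilon>}) / real n) \<longlonglongrightarrow> 0"
    proof (rule Lim_null_comparison[OF _ B2], rule always_eventually, rule allI)
      fix n
      let ?A = "{k\<in>{1..n}. N (y (Suc k) - y k) z \<ge> \<epsilon>}"
      have sub: "?A \<subseteq> (\<lambda>k. 2*k) ` B n \<union> (\<lambda>k. 2*k - 1) ` B n"
      proof
        fix j assume j: "j \<in> ?A"
        show "j \<in> (\<lambda>k. 2*k) ` B n \<union> (\<lambda>k. 2*k - 1) ` B n"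
        proof (cases "even j")
          case True
          then obtain k where k: "j = 2*k" by blast
          have "y (Suc j) - y j = - (x k - x0)" using k by (simp add: y_def)
          hence "N (x k - x0) z \<ge> \<epsilon>" using j neg_N[OF assms(1), of "x k - x0" z] by simp
          moreover have "k \<in> {1..n}" using j k by auto
          ultimately show ?thesis using k by (auto simp: B_def)
        next
          case False
          then obtain k where k: "j = 2*k + 1" using oddE by blast
          have "y (Suc j) - y j = x (k+1) - x0" using k by (simp add: y_def)
          hence "N (x (k+1) - x0) z \<ge> \<epsilon>" using j by auto
          moreover have "k+1 \<in> {1..n}" using j k by auto
          ultimately have "k+1 \<in> B n" by (auto simp: B_def)
          moreover have "j = 2*(k+1) - 1" using k by simp
          ultimately show ?thesis by blast
        qed
      qed
      have fin: "finite (B n)" by (simp add: B_def)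
      have "card ?A \<le> card ((\<lambda>k. 2*k) ` B n \<union> (\<lambda>k. 2*k - 1) ` B n)"
        using sub fin by (intro card_mono) auto
      also have "\<dots> \<le> card ((\<lambda>k. 2*k) ` B n) + card ((\<lambda>k. 2*k - 1) ` B n)"
        by (rule card_Un_le)
      also have "\<dots> \<le> 2 * card (B n)"
        using card_image_le[OF fin, of "\<lambda>k. 2*k"] card_image_le[OF fin, of "\<lambda>k. 2*k-1"] by linarith
      finally have "real (card ?A) \<le> 2 * real (card (B n))" by linarith
      hence "real (card ?A) / real n \<le> 2 * real (card (B n)) / real n"
        by (simp add: divide_right_mono)
      thus "norm (real (card ?A) / real n) \<le> 2 * (real (card (B n)) / real n)" by simp
    qed
  qed
  have fqc: "stat_quasi_cauchy N (\<lambda>k. f (y k))"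
    using assms(2) yE qc unfolding stat_ward_cont_def by blast
  show "stat_conv N (\<lambda>k. f (x k)) (f x0)"
    unfolding stat_conv_def
  proof (intro allI impI)
    fix \<epsilon> :: real and z assume e: "\<epsilon> > 0"
    define D where "D n = {k\<in>{1..n}. N (f (y (Suc k)) - f (y k)) z \<ge> \<epsilon>}" for n
    have D0: "(\<lambda>n. real (card (D n)) / real n) \<longlonglongrightarrow> 0"
      using fqc e unfolding stat_quasi_cauchy_def D_def by blast
    have sm: "strict_mono (\<lambda>n::nat. 2*n)" by (auto simp: strict_mono_def)
    have "(\<lambda>n. 2 * (real (card (D (2*n))) / real (2*n))) \<longlonglongrightarrow> 2 * 0"
      using LIMSEQ_subseq_LIMSEQ[OF D0 sm] by (intro tendsto_mult tendsto_const) (simp add: o_def)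
    hence D2: "(\<lambda>n. 2 * (real (card (D (2*n))) / real (2*n))) \<longlonglongrightarrow> 0" by simp
    show "(\<lambda>n. real (card {k\<in>{1..n}. N (f (x k) - f x0) z \<ge> \<epsilon>}) / real n) \<longlonglongrightarrow> 0"
    proof (rule Lim_null_comparison[OF _ D2], rule always_eventually, rule allI)
      fix n
      let ?C = "{k\<in>{1..n}. N (f (x k) - f x0) z \<ge> \<epsilon>}"
      have sub: "(\<lambda>k. 2*k) ` ?C \<subseteq> D (2*n)"
      proof
        fix j assume "j \<in> (\<lambda>k. 2*k) ` ?C"
        then obtain k where k: "k \<in> ?C" "j = 2*k" by blast
        have "f (y (Suc j)) - f (y j) = - (f (x k) - f x0)" using k(2) by (simp add: y_def)
        thus "j \<in> D (2*n)" using k neg_N[OF assms(1), of "f (x k) - f x0" z] by (simp add: D_def)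
      qed
      have "card ?C = card ((\<lambda>k. 2*k) ` ?C)" by (rule card_image[symmetric]) (auto simp: inj_on_def)
      also have "\<dots> \<le> card (D (2*n))" using sub by (intro card_mono) (auto simp: D_def)
      finally have le: "real (card ?C) \<le> real (card (D (2*n)))" by simp
      have "real (card ?C) / real n \<le> 2 * (real (card (D (2*n))) / real (2*n))"
      proof (cases "n = 0")
        case False
        have "real (card ?C) / real n \<le> real (card (D (2*n))) / real n"
          using le by (simp add: divide_right_mono)
        also have "\<dots> = 2 * (real (card (D (2*n))) / real (2*n))" using False by simp
        finally show ?thesis .
      qed simp
      thus "norm (real (card ?C) / real n) \<le> 2 * (real (card (D (2*n))) / real (2*n))" by simp
    qed
  qed
qed

end
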